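(* Let $G$ be a finite graph and $\alpha(G)$ its independence number. (a) For every integer $b\ge 1$, $\phi^0_b(G)\ge \phi(G)$; moreover $\lim_{b\to\infty}\phi^0_b(G)=\phi(G)$. (b) For all integers $a'\ge a\ge 0$ and $b'\ge b\ge 1$, $\phi^a_b(G)\ge \phi^{a'}_{b'}(G)$. (c) For all integers $a\ge 0$ and $b\ge 1$, $\phi^a_b(G)\ge \frac{|V(G)|-a\alpha(G)}{\bar{\alpha}(G)}$.
   Context: An independent set $F$ of $G$ is a free independent set if it is contained in at least two distinct maximal independent sets of $G$; $\bar{\alpha}(G)$ is the maximum size of a free independent set. An edge $e=uv$ supports a free independent set $F$ if $F\cap(N(u)\cup N(v))=\emptyset$. The free chromatic number $\phi(G)$ is the minimum $t$ such that $V(G)$ can be partitioned into $t$ free independent sets ($\infty$ if impossible). For integers $a\ge0$, $b\ge1$, the $(a,b)$-free chromatic number $\phi^a_b(G)$ is the minimum natural number $t$ such that: (1) $V(G)$ is partitioned into independent sets $V_1,\dots,V_t$, of which $V_1,\dots,V_{t-a}$ are free independent sets; and (2) there are edges $e_1,\dots,e_{t-a}$ (not necessarily distinct) with $e_i$ supporting $V_i$ for each $i$, such that every vertex $v$ is incident with at most $b$ of the edges $e_1,\dots,e_{t-a}$. If no such $t$ exists, $\phi^a_b(G)=\infty$. *)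

theory Defs
  imports Main "HOL-Library.Extended_Real"
begin

definition fin_graph :: "'a set \<Rightarrow> 'a set set \<Rightarrow> bool" where
  "fin_graph V E \<longleftrightarrow> finite V \<and> (\<forall>e\<in>E. \<exists>u v. u \<noteq> v \<and> u \<in> V \<and> v \<in> V \<and> e = {u, v})"

definition nbhd :: "'a set set \<Rightarrow> 'a \<Rightarrow> 'a set" where
  "nbhd E u = {w. {u, w} \<in> E}"

definition indep :: "'a set \<Rightarrow> 'a set set \<Rightarrow> 'a set \<Rightarrow> bool" where
  "indep V E S \<longleftrightarrow> S \<subseteq> V \<and> (\<forall>u\<in>S. \<forall>v\<in>S. {u, v} \<notin> E)"

definition max_indep :: "'a set \<Rightarrow> 'a set set \<Rightarrow> 'a set \<Rightarrow> bool" where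
  "max_indep V E S \<longleftrightarrow> indep V E S \<and> (\<forall>T. indep V E T \<and> S \<subseteq> T \<longrightarrow> T = S)"

definition free_indep :: "'a set \<Rightarrow> 'a set set \<Rightarrow> 'a set \<Rightarrow> bool" where
  "free_indep V E F \<longleftrightarrow> indep V E F \<and>
     (\<exists>M1 M2. max_indep V E M1 \<and> max_indep V E M2 \<and> M1 \<noteq> M2 \<and> F \<subseteq> M1 \<and> F \<subseteq> M2)"

definition indep_num :: "'a set \<Rightarrow> 'a set set \<Rightarrow> nat" where
  "indep_num V E = Max (card ` {S. indep V E S})"

definition free_indep_num :: "'a set \<Rightarrow> 'a set set \<Rightarrow> nat" where
  "free_indep_num V E =
     (if \<exists>F. free_indep V E F then Max (card ` {F. free_indep V E F}) else 0)"

definition supports :: "'a set set \<Rightarrow> 'a set \<Rightarrow> 'a set \<Rightarrow> bool" where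
  "supports E e F \<longleftrightarrow> (\<exists>u v. e = {u, v} \<and> e \<in> E \<and> F \<inter> (nbhd E u \<union> nbhd E v) = {})"

definition indep_partition :: "'a set \<Rightarrow> 'a set set \<Rightarrow> nat \<Rightarrow> (nat \<Rightarrow> 'a set) \<Rightarrow> bool" where
  "indep_partition V E t P \<longleftrightarrow>
     (\<forall>i<t. P i \<noteq> {} \<and> indep V E (P i)) \<and>
     (\<forall>i<t. \<forall>j<t. i \<noteq> j \<longrightarrow> P i \<inter> P j = {}) \<and>
     (\<Union>i<t. P i) = V"

text \<open>Free chromatic number (\<infinity> if no such partition exists, since Inf {} = \<infinity>).\<close>
definition free_chrom :: "'a set \<Rightarrow> 'a set set \<Rightarrow> enat" where
  "free_chrom V E = Inf {enat t | t. \<exists>P. indep_partition V E t P \<and> (\<forall>i<t. free_indep V E (P i))}"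

text \<open>Parts P 0..P (t-a-1) are the free ones (V_1..V_{t-a});
  edges ed 0..ed (t-a-1) with ed i supporting P i; every vertex lies on at most b of them,
  counted with multiplicity. (t - a is truncated subtraction: if t \<le> a no part must be free.)\<close>
definition ab_free_chrom :: "nat \<Rightarrow> nat \<Rightarrow> 'a set \<Rightarrow> 'a set set \<Rightarrow> enat" where
  "ab_free_chrom a b V E = Inf {enat t | t. \<exists>P ed. indep_partition V E t P \<and>
      (\<forall>i<t - a. free_indep V E (P i) \<and> ed i \<in> E \<and> supports E (ed i) (P i)) \<and>
      (\<forall>v\<in>V. card {i. i < t - a \<and> v \<in> ed i} \<le> b)}"

end

theory Submission
  imports Defs
begin

lemma no_loop: assumes G: "fin_graph V E" shows "{u,u} \<notin> E"
  using G unfolding fin_graph_def by (metis doubleton_eq_iff)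

lemma support_aux:
  assumes G: "fin_graph V E" and M1: "max_indep V E M1" and M2: "max_indep V E M2"
    and F1: "F \<subseteq> M1" and F2: "F \<subseteq> M2" and u1: "u \<in> M1" and u2: "u \<notin> M2"
  shows "\<exists>e. e \<in> E \<and> supports E e F"
proof -
  have i1: "indep V E M1" and i2: "indep V E M2" using M1 M2 by (auto simp: max_indep_def)
  have uV: "u \<in> V" using i1 u1 by (auto simp: indep_def)
  have "\<not> indep V E (insert u M2)"
  proof
    assume "indep V E (insert u M2)"
    then have "insert u M2 = M2" using M2 unfolding max_indep_def by blast
    with u2 show False by blast
  qed
  then obtain x y where xy: "x \<in> insert u M2" "y \<in> insert u M2" "{x,y} \<in> E"
    using i2 uV unfolding indep_def by blast
  have loop: "{u,u} \<notin> E" using no_loop[OF G] .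
  obtain w where w: "w \<in> M2" "{u,w} \<in> E"
  proof -
    from xy i2 loop show ?thesis using that unfolding indep_def
      by (auto simp: insert_commute)
  qed
  have "supports E {u,w} F"
    unfolding supports_def nbhd_def
  proof (intro exI conjI)
    show "F \<inter> ({wa. {u, wa} \<in> E} \<union> {wa. {w, wa} \<in> E}) = {}"
      using i1 i2 u1 w(1) F1 F2 unfolding indep_def by blast
  qed (use w in auto)
  with w show ?thesis by blast
qed

lemma free_support:
  assumes G: "fin_graph V E" and F: "free_indep V E F"
  shows "\<exists>e. e \<in> E \<and> supports E e F"
proof -
  from F obtain M1 M2 where M: "max_indep V E M1" "max_indep V E M2" "M1 \<noteq> M2"
    "F \<subseteq> M1" "F \<subseteq> M2" unfolding free_indep_def by blast
  show ?thesis
  proof (cases "M1 \<subseteq> M2")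
    case True
    then obtain u where "u \<in> M2" "u \<notin> M1" using M(3) by blast
    then show ?thesis using support_aux[OF G M(2) M(1) M(5) M(4)] by blast
  next
    case False
    then obtain u where "u \<in> M1" "u \<notin> M2" by blast
    then show ?thesis using support_aux[OF G M(1) M(2) M(4) M(5)] by blast
  qed
qed

lemma Inf_attained:
  fixes S :: "enat set"
  assumes "Inf S \<noteq> \<infinity>" shows "Inf S \<in> S"
proof -
  have "S \<noteq> {}" using assms by (metis Inf_empty top_enat_def)
  then obtain k where "k \<in> S" by blast
  then show ?thesis by (rule wellorder_InfI)
qed

lemma le_indep_num:
  assumes G: "fin_graph V E" and S: "indep V E S" shows "card S \<le> indep_num V E"
proof -
  have fV: "finite V" using G by (simp add: fin_graph_def)
  have "{S. indep V E S} \<subseteq> Pow V" by (auto simp: indep_def)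
  then have "finite {S. indep V E S}" using fV by (meson finite_Pow_iff finite_subset)
  then show ?thesis unfolding indep_num_def using S by simp
qed

lemma le_free_num:
  assumes G: "fin_graph V E" and S: "free_indep V E S" shows "card S \<le> free_indep_num V E"
proof -
  have fV: "finite V" using G by (simp add: fin_graph_def)
  have "{S. free_indep V E S} \<subseteq> Pow V" by (auto simp: free_indep_def indep_def)
  then have "finite {S. free_indep V E S}" using fV by (meson finite_Pow_iff finite_subset)
  then show ?thesis unfolding free_indep_num_def using S by auto
qed

lemma card_partition:
  assumes G: "fin_graph V E" and P: "indep_partition V E t P"
  shows "card V = (\<Sum>i<t. card (P i))"
proof -
  have fV: "finite V" using G by (simp add: fin_graph_def)
  have V: "V = (\<Union>i<t. P i)" using P by (simp add: indep_partition_def)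
  have fin: "\<forall>i\<in>{..<t}. finite (P i)" using fV V by (metis UN_upper finite_subset)
  have "card (\<Union>i<t. P i) = (\<Sum>i<t. card (P i))"
    by (rule card_UN_disjoint) (use fin P in \<open>auto simp: indep_partition_def\<close>)
  then show ?thesis using V by simp
qed

lemma part_c:
  assumes G: "fin_graph V E" and P: "indep_partition V E t P"
    and fr: "\<forall>i<t - a. free_indep V E (P i)"
  shows "ereal (real (card V) - real a * real (indep_num V E)) / ereal (real (free_indep_num V E))
              \<le> ereal (real t)"
proof -
  let ?al = "indep_num V E" and ?be = "free_indep_num V E"
  have ne: "\<And>i. i < t \<Longrightarrow> P i \<noteq> {}" and ind: "\<And>i. i < t \<Longrightarrow> indep V E (P i)"
    using P by (auto simp: indep_partition_def)
  have ca: "\<And>i. i < t \<Longrightarrow> card (P i) \<le> ?al" using le_indep_num[OF G] ind by blast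
  have cb: "\<And>i. i < t - a \<Longrightarrow> card (P i) \<le> ?be" using le_free_num[OF G] fr by blast
  have split: "{..<t} = {..<t-a} \<union> {t-a..<t}" by auto
  have "card V = (\<Sum>i<t. card (P i))" by (rule card_partition[OF G P])
  also have "\<dots> = (\<Sum>i<t-a. card (P i)) + (\<Sum>i\<in>{t-a..<t}. card (P i))"
    by (subst split, rule sum.union_disjoint) auto
  also have "\<dots> \<le> (\<Sum>i<t-a. ?be) + (\<Sum>i\<in>{t-a..<t}. ?al)"
    by (intro add_mono sum_mono) (use ca cb in auto)
  also have "\<dots> \<le> (t-a) * ?be + a * ?al" by (simp add: mult_right_mono; linarith)
  finally have bnd: "card V \<le> (t-a) * ?be + a * ?al" .
  show ?thesis
  proof (cases "t \<le> a")
    case True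
    then have x: "real (card V) - real a * real ?al \<le> 0" using bnd by (simp add: of_nat_mult[symmetric] del: of_nat_mult)
    show ?thesis
    proof (cases "?be = 0")
      case True
      have "ereal (real (card V) - real a * real ?al) / ereal 0 \<le> 0" using x by simp
      also have "(0::ereal) \<le> ereal (real t)" by simp
      finally show ?thesis using True by simp
    next
      case False
      have "(real (card V) - real a * real ?al) / real ?be \<le> 0"
        using x False by (simp add: divide_nonpos_pos)
      also have "\<dots> \<le> real t" by simp
      finally show ?thesis using False by simp
    qed
  next
    case False
    then have "0 < t - a" by simp
    then have "1 \<le> card (P 0)" using ne[of 0] ind[of 0] G
      by (metis card_0_eq diff_le_self finite_subset fin_graph_def indep_def less_le_trans
          less_one not_le_imp_less)
    then have be: "1 \<le> ?be" using cb[OF \<open>0 < t - a\<close>] by simp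
    have "real (card V) - real a * real ?al \<le> real (t - a) * real ?be"
      using bnd by (simp add: of_nat_mult[symmetric] del: of_nat_mult)
    then have "(real (card V) - real a * real ?al) / real ?be \<le> real (t - a)"
      using be by (simp add: divide_le_eq)
    also have "\<dots> \<le> real t" by simp
    finally show ?thesis using be by simp
  qed
qed

theorem mainTheorem6:
  fixes V :: "'a set" and E :: "'a set set"
  assumes G: "fin_graph V E"
  shows "(\<forall>b\<ge>1. ab_free_chrom 0 b V E \<ge> free_chrom V E)
       \<and> ((\<lambda>b. ab_free_chrom 0 b V E) \<longlonglongrightarrow> free_chrom V E)
       \<and> (\<forall>a a' b b'. a \<le> a' \<and> 1 \<le> b \<and> b \<le> b' \<longrightarrow>
            ab_free_chrom a b V E \<ge> ab_free_chrom a' b' V E)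
       \<and> (\<forall>a b. 1 \<le> b \<longrightarrow>
            ereal (real (card V) - real a * real (indep_num V E)) / ereal (real (free_indep_num V E))
              \<le> ereal_of_enat (ab_free_chrom a b V E))"
proof -
  have A: "ab_free_chrom 0 b V E \<ge> free_chrom V E" for b
    unfolding ab_free_chrom_def free_chrom_def
    by (rule Inf_superset_mono) auto
  have B: "(\<lambda>b. ab_free_chrom 0 b V E) \<longlonglongrightarrow> free_chrom V E"
  proof (cases "free_chrom V E = \<infinity>")
    case True
    have "ab_free_chrom 0 b V E = \<infinity>" for b
    proof -
      have "free_chrom V E \<le> ab_free_chrom 0 b V E" by (rule A)
      then have "top \<le> ab_free_chrom 0 b V E" using True by (simp only: top_enat_def)
      then show ?thesis by (cases "ab_free_chrom 0 b V E") (auto simp: top_enat_def)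
    qed
    then have "(\<lambda>b. ab_free_chrom 0 b V E) = (\<lambda>b. free_chrom V E)" using True by (intro ext) simp
    then show ?thesis by (simp only: tendsto_const)
  next
    case False
    have "free_chrom V E \<in> {enat t | t. \<exists>P. indep_partition V E t P \<and> (\<forall>i<t. free_indep V E (P i))}"
      using False unfolding free_chrom_def by (rule Inf_attained)
    then obtain t P where t: "free_chrom V E = enat t" "indep_partition V E t P"
      "\<forall>i<t. free_indep V E (P i)" by blast
    have "\<forall>i. \<exists>e. i < t \<longrightarrow> e \<in> E \<and> supports E e (P i)"
      using free_support[OF G] t(3) by blast
    then obtain ed where ed0: "\<forall>i. i < t \<longrightarrow> ed i \<in> E \<and> supports E (ed i) (P i)"
      by (rule choice[THEN exE]) blast
    then have ed: "\<And>i. i < t \<Longrightarrow> ed i \<in> E \<and> supports E (ed i) (P i)" by blast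
    have "ab_free_chrom 0 b V E = enat t" if "b \<ge> t" for b
    proof (rule antisym)
      have "card {i. i < t - 0 \<and> v \<in> ed i} \<le> b" for v
      proof -
        have "card {i. i < t - 0 \<and> v \<in> ed i} \<le> card {..<t}" by (rule card_mono) auto
        then show ?thesis using that by simp
      qed
      then have "enat t \<in> {enat t | t. \<exists>P ed. indep_partition V E t P \<and>
      (\<forall>i<t - 0. free_indep V E (P i) \<and> ed i \<in> E \<and> supports E (ed i) (P i)) \<and>
      (\<forall>v\<in>V. card {i. i < t - 0 \<and> v \<in> ed i} \<le> b)}"
        unfolding diff_zero using t(2,3) ed by blast
      then show "ab_free_chrom 0 b V E \<le> enat t" unfolding ab_free_chrom_def by (rule Inf_lower)
    next
      show "enat t \<le> ab_free_chrom 0 b V E" using A[of b] t by simp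
    qed
    then have "eventually (\<lambda>b. ab_free_chrom 0 b V E = free_chrom V E) sequentially"
      unfolding eventually_sequentially using t(1) by auto
    then show ?thesis by (rule tendsto_eventually)
  qed
  have C: "ab_free_chrom a b V E \<ge> ab_free_chrom a' b' V E" if "a \<le> a'" "b \<le> b'" for a a' b b'
    unfolding ab_free_chrom_def
  proof (rule Inf_superset_mono, safe)
    fix t P ed
    assume h: "indep_partition V E t P"
      "\<forall>i<t - a. free_indep V E (P i) \<and> ed i \<in> E \<and> supports E (ed i) (P i)"
      "\<forall>v\<in>V. card {i. i < t - a \<and> v \<in> ed i} \<le> b"
    have "\<forall>v\<in>V. card {i. i < t - a' \<and> v \<in> ed i} \<le> b'"
    proof
      fix v assume "v \<in> V"
      have "card {i. i < t - a' \<and> v \<in> ed i} \<le> card {i. i < t - a \<and> v \<in> ed i}"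
        by (rule card_mono) (use that in \<open>auto simp: finite_nat_set_iff_bounded\<close>)
      moreover have "card {i. i < t - a \<and> v \<in> ed i} \<le> b" using h(3) \<open>v\<in>V\<close> by blast
      ultimately show "card {i. i < t - a' \<and> v \<in> ed i} \<le> b'" using that(2) by linarith
    qed
    moreover have "\<forall>i<t - a'. free_indep V E (P i) \<and> ed i \<in> E \<and> supports E (ed i) (P i)"
      using h(2) that by auto
    ultimately show "\<exists>ta. enat t = enat ta \<and> (\<exists>P ed. indep_partition V E ta P \<and>
      (\<forall>i<ta - a'. free_indep V E (P i) \<and> ed i \<in> E \<and> supports E (ed i) (P i)) \<and>
      (\<forall>v\<in>V. card {i. i < ta - a' \<and> v \<in> ed i} \<le> b'))"
      using h(1) by blast
  qed
  have D: "ereal (real (card V) - real a * real (indep_num V E)) / ereal (real (free_indep_num V E))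
              \<le> ereal_of_enat (ab_free_chrom a b V E)" for a b
  proof (cases "ab_free_chrom a b V E = \<infinity>")
    case True then show ?thesis by simp
  next
    case False
    have "ab_free_chrom a b V E \<in> {enat t | t. \<exists>P ed. indep_partition V E t P \<and>
      (\<forall>i<t - a. free_indep V E (P i) \<and> ed i \<in> E \<and> supports E (ed i) (P i)) \<and>
      (\<forall>v\<in>V. card {i. i < t - a \<and> v \<in> ed i} \<le> b)}"
      using False unfolding ab_free_chrom_def by (rule Inf_attained)
    then obtain t P where t: "ab_free_chrom a b V E = enat t" "indep_partition V E t P"
      "\<forall>i<t - a. free_indep V E (P i)" by blast
    show ?thesis using part_c[OF G t(2) t(3)] t(1) by simp
  qed
  show ?thesis using A B C D by blast
qed

end
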